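(* Let $X$ be the class of continuous functions $f:[0,1]\to\mathbb{R}$ with $f(0),f(1)\in\mathbb{Z}$. Then each of the two families of operators $\widetilde{B}_n$, $n\in\mathbb{N}_+$, and $\widehat{B}_n$, $n\in\mathbb{N}_+$, uniformly asymptotically preserves monotonicity on $X$.
   Context: For $n\in\mathbb{N}_+$ and $f:[0,1]\to\mathbb{R}$, define $\widetilde{B}_n(f)(x):=\sum_{k=0}^n \left[f\left(\frac{k}{n}\right)\binom{n}{k}\right]x^k(1-x)^{n-k}$, where $[\alpha]$ is the largest integer $\le\alpha$, and $\widehat{B}_n(f)(x):=\sum_{k=0}^n \left\langle f\left(\frac{k}{n}\right)\binom{n}{k}\right\rangle x^k(1-x)^{n-k}$, where $\langle\alpha\rangle$ is the integer nearest to $\alpha$ (when $\alpha$ is a half-integer, $\langle\alpha\rangle$ may be either of the two neighbouring integers, chosen arbitrarily; the result holds for any such choice). Definition: a family of operators $L_n:X\to X$, $n\in\mathbb{N}_+$, on a class $X$ of functions defined on $I\subseteq\mathbb{R}$ uniformly asymptotically preserves monotonicity on $X$ if there exist $n_0\in\mathbb{N}_+$ and functions $\varepsilon_n,\eta_n:I\to\mathbb{R}$, $n\ge n_0$, such that: (i) $\varepsilon_n\to 0$ and $\eta_n\to 0$ uniformly on $I$ as $n\to\infty$; (ii) whenever $f\in X$ is monotone increasing on $I$, $L_n(f)+\varepsilon_n$ is monotone increasing on $I$ for all $n\ge n_0$; (iii) whenever $f\in X$ is monotone decreasing on $I$, $L_n(f)+\eta_n$ is monotone decreasing on $I$ for all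 $n\ge n_0$. Monotone increasing/decreasing are meant in the non-strict sense. *)

theory Defs
  imports "HOL-Analysis.Analysis"
begin

definition classX :: "(real \<Rightarrow> real) set" where
  "classX = {f. continuous_on {0..1} f \<and> f 0 \<in> \<int> \<and> f 1 \<in> \<int>}"

definition roundB :: "(real \<Rightarrow> int) \<Rightarrow> nat \<Rightarrow> (real \<Rightarrow> real) \<Rightarrow> real \<Rightarrow> real" where
  "roundB r n f x = (\<Sum>k=0..n. real_of_int (r (f (real k / real n) * real (n choose k))) * x ^ k * (1 - x) ^ (n - k))"

definition Btilde :: "nat \<Rightarrow> (real \<Rightarrow> real) \<Rightarrow> real \<Rightarrow> real" where
  "Btilde n f = roundB floor n f"

text \<open>Admissible nearest-integer functions (ties broken arbitrarily).\<close>
definition nearest_int_fun :: "(real \<Rightarrow> int) \<Rightarrow> bool" where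
  "nearest_int_fun r \<longleftrightarrow> (\<forall>a. \<bar>real_of_int (r a) - a\<bar> \<le> 1/2)"

definition unif_asym_pres_mono ::
  "(nat \<Rightarrow> (real \<Rightarrow> real) \<Rightarrow> real \<Rightarrow> real) \<Rightarrow> (real \<Rightarrow> real) set \<Rightarrow> real set \<Rightarrow> bool" where
  "unif_asym_pres_mono L X I \<longleftrightarrow>
     (\<exists>(n0::nat) (eps :: nat \<Rightarrow> real \<Rightarrow> real) (eta :: nat \<Rightarrow> real \<Rightarrow> real).
        n0 \<ge> 1 \<and>
        (\<forall>e>0. \<forall>\<^sub>F n in sequentially. \<forall>x\<in>I. \<bar>eps n x\<bar> < e) \<and>
        (\<forall>e>0. \<forall>\<^sub>F n in sequentially. \<forall>x\<in>I. \<bar>eta n x\<bar> < e) \<and>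
        (\<forall>f\<in>X. mono_on I f \<longrightarrow> (\<forall>n\<ge>n0. mono_on I (\<lambda>x. L n f x + eps n x))) \<and>
        (\<forall>f\<in>X. antimono_on I f \<longrightarrow> (\<forall>n\<ge>n0. antimono_on I (\<lambda>x. L n f x + eta n x))))"

end

theory Submission
  imports Defs
begin

lemma bern_deriv_ident:
  fixes c :: "nat \<Rightarrow> real" and x :: real
  shows "(\<Sum>k=0..Suc m. c k * real (Suc m choose k) * (real k * x^(k-1) * (1-x)^(Suc m - k)
            - real (Suc m - k) * x^k * (1-x)^(Suc m - k - 1)))
       = real (Suc m) * (\<Sum>k=0..m. (c (Suc k) - c k) * real (m choose k) * x^k * (1-x)^(m-k))"
proof -
  have A: "(\<Sum>k=0..Suc m. c k * real (Suc m choose k) * (real k * x^(k-1) * (1-x)^(Suc m - k)))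
     = (\<Sum>k=0..m. real (Suc m) * (c (Suc k) * real (m choose k) * x^k * (1-x)^(m-k)))"
  proof -
    have "(\<Sum>k=0..Suc m. c k * real (Suc m choose k) * (real k * x^(k-1) * (1-x)^(Suc m - k)))
      = (\<Sum>k=0..m. c (Suc k) * real (Suc m choose Suc k) * (real (Suc k) * x^k * (1-x)^(m - k)))"
      by (subst sum.atLeast0_atMost_Suc_shift) simp
    also have "\<dots> = (\<Sum>k=0..m. real (Suc m) * (c (Suc k) * real (m choose k) * x^k * (1-x)^(m-k)))"
    proof (rule sum.cong[OF refl])
      fix k assume "k \<in> {0..m}"
      have "real (Suc m choose Suc k) * real (Suc k) = real (Suc m) * real (m choose k)"
        using Suc_times_binomial_eq[of m k] by (metis of_nat_mult)
      then show "c (Suc k) * real (Suc m choose Suc k) * (real (Suc k) * x^k * (1-x)^(m - k))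
           = real (Suc m) * (c (Suc k) * real (m choose k) * x^k * (1-x)^(m-k))"
      proof -
        assume eq: "real (Suc m choose Suc k) * real (Suc k) = real (Suc m) * real (m choose k)"
        have "c (Suc k) * real (Suc m choose Suc k) * (real (Suc k) * x^k * (1-x)^(m - k))
           = c (Suc k) * x^k * (1-x)^(m - k) * (real (Suc m choose Suc k) * real (Suc k))"
          by (simp only: mult_ac)
        also have "\<dots> = c (Suc k) * x^k * (1-x)^(m - k) * (real (Suc m) * real (m choose k))"
          by (simp only: eq)
        also have "\<dots> = real (Suc m) * (c (Suc k) * real (m choose k) * x^k * (1-x)^(m-k))"
          by (simp only: mult_ac)
        finally show ?thesis .
      qed
    qed
    finally show ?thesis .
  qed
  have B: "(\<Sum>k=0..Suc m. c k * real (Suc m choose k) * (real (Suc m - k) * x^k * (1-x)^(Suc m - k - 1)))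
     = (\<Sum>k=0..m. real (Suc m) * (c k * real (m choose k) * x^k * (1-x)^(m-k)))"
  proof -
    have "(\<Sum>k=0..Suc m. c k * real (Suc m choose k) * (real (Suc m - k) * x^k * (1-x)^(Suc m - k - 1)))
       = (\<Sum>k=0..m. c k * real (Suc m choose k) * (real (Suc m - k) * x^k * (1-x)^(Suc m - k - 1)))"
      by (subst sum.atLeast0_atMost_Suc) simp
    also have "\<dots> = (\<Sum>k=0..m. real (Suc m) * (c k * real (m choose k) * x^k * (1-x)^(m-k)))"
    proof (rule sum.cong[OF refl])
      fix k assume k: "k \<in> {0..m}"
      have "real (Suc m - k) * real (Suc m choose k) = real (Suc m) * real (m choose k)"
        using binomial_absorb_comp[of "Suc m" k] by (metis diff_Suc_1 of_nat_mult)
      moreover have "Suc m - k - 1 = m - k" using k by simp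
      ultimately show "c k * real (Suc m choose k) * (real (Suc m - k) * x^k * (1-x)^(Suc m - k - 1))
           = real (Suc m) * (c k * real (m choose k) * x^k * (1-x)^(m-k))"
      proof -
        assume eq: "real (Suc m - k) * real (Suc m choose k) = real (Suc m) * real (m choose k)"
          and e2: "Suc m - k - 1 = m - k"
        have "c k * real (Suc m choose k) * (real (Suc m - k) * x^k * (1-x)^(Suc m - k - 1))
           = c k * x^k * (1-x)^(m - k) * (real (Suc m - k) * real (Suc m choose k))"
          unfolding e2 by (simp only: mult_ac)
        also have "\<dots> = c k * x^k * (1-x)^(m - k) * (real (Suc m) * real (m choose k))"
          by (simp only: eq)
        also have "\<dots> = real (Suc m) * (c k * real (m choose k) * x^k * (1-x)^(m-k))"
          by (simp only: mult_ac)
        finally show ?thesis .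
      qed
    qed
    finally show ?thesis .
  qed
  show ?thesis
    unfolding right_diff_distrib sum_subtractf A B
    by (simp add: sum_distrib_left sum_subtractf algebra_simps)
qed

lemma bern_has_deriv:
  fixes c :: "nat \<Rightarrow> real"
  shows "((\<lambda>x. \<Sum>k=0..n. c k * real (n choose k) * x^k * (1-x)^(n-k)) has_real_derivative
     (\<Sum>k=0..n. c k * real (n choose k) * (real k * x^(k-1) * (1-x)^(n - k)
            - real (n - k) * x^k * (1-x)^(n - k - 1)))) (at x)"
proof (rule DERIV_sum)
  fix k assume "k \<in> {0..n}"
  show "((\<lambda>x. c k * real (n choose k) * x^k * (1-x)^(n-k)) has_real_derivative
     c k * real (n choose k) * (real k * x^(k-1) * (1-x)^(n - k)
            - real (n - k) * x^k * (1-x)^(n - k - 1))) (at x)"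
    by (auto intro!: derivative_eq_intros simp: algebra_simps)
qed

lemma bern_mono:
  fixes c :: "nat \<Rightarrow> real"
  assumes "\<And>k. k < n \<Longrightarrow> c k \<le> c (Suc k)"
  shows "mono_on {0..1} (\<lambda>x. \<Sum>k=0..n. c k * real (n choose k) * x^k * (1-x)^(n-k))"
proof (cases n)
  case 0
  then show ?thesis by (simp add: mono_on_def)
next
  case (Suc m)
  show ?thesis
  proof (rule mono_onI)
    fix a b :: real assume ab: "a \<in> {0..1}" "b \<in> {0..1}" "a \<le> b"
    show "(\<Sum>k=0..n. c k * real (n choose k) * a^k * (1-a)^(n-k)) \<le> (\<Sum>k=0..n. c k * real (n choose k) * b^k * (1-b)^(n-k))"
    proof (rule deriv_nonneg_imp_mono[OF bern_has_deriv])
      fix x :: real assume x: "x \<in> {a..b}"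
      then have x01: "0 \<le> x" "x \<le> 1" using ab by auto
      show "0 \<le> (\<Sum>k=0..n. c k * real (n choose k) * (real k * x^(k-1) * (1-x)^(n - k)
            - real (n - k) * x^k * (1-x)^(n - k - 1)))"
        unfolding Suc bern_deriv_ident
        using assms x01 Suc by (intro mult_nonneg_nonneg sum_nonneg) auto
    qed (use ab in auto)
  qed
qed

definition dl :: "nat \<Rightarrow> nat \<Rightarrow> real" where
  "dl n j = (if 0 < j \<and> j < n then 1 / real (n choose j) else 0)"

definition ee :: "nat \<Rightarrow> nat \<Rightarrow> real" where
  "ee n k = (\<Sum>j<k. dl n j + dl n (Suc j))"

definition epsB :: "nat \<Rightarrow> real \<Rightarrow> real" where
  "epsB n x = (\<Sum>k=0..n. ee n k * real (n choose k) * x^k * (1-x)^(n-k))"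

lemma dl_nonneg: "dl n j \<ge> 0" by (simp add: dl_def)

lemma ee_nonneg: "ee n k \<ge> 0"
  unfolding ee_def by (intro sum_nonneg add_nonneg_nonneg dl_nonneg)

lemma ee_Suc: "ee n (Suc k) = ee n k + dl n k + dl n (Suc k)"
  unfolding ee_def by simp

lemma ee_mono: "k \<le> k' \<Longrightarrow> ee n k \<le> ee n k'"
  unfolding ee_def by (intro sum_mono2) (auto intro: add_nonneg_nonneg dl_nonneg)

lemma ee_le: "ee n n \<le> 2 * (\<Sum>j\<le>n. dl n j)"
proof -
  have 1: "(\<Sum>j<n. dl n j) \<le> (\<Sum>j\<le>n. dl n j)"
    by (intro sum_mono2) (auto intro: dl_nonneg)
  have "(\<Sum>j<Suc n. dl n j) = dl n 0 + (\<Sum>j<n. dl n (Suc j))"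
    by (rule sum.lessThan_Suc_shift)
  then have 2: "(\<Sum>j<n. dl n (Suc j)) \<le> (\<Sum>j\<le>n. dl n j)"
    using dl_nonneg[of n 0] by (simp add: lessThan_Suc_atMost)
  show ?thesis using 1 2 unfolding ee_def sum.distrib by simp
qed

lemma binom_ge_two:
  assumes "2 \<le> j" "j + 2 \<le> n"
  shows "n choose 2 \<le> n choose j"
proof (cases "2 * j \<le> n")
  case True
  then show ?thesis using assms binomial_mono[of 2 j n] by simp
next
  case False
  have "n choose j = n choose (n - j)" by (rule binomial_symmetric) (use assms in simp)
  moreover have "n choose 2 \<le> n choose (n - j)"
    using assms False binomial_mono[of 2 "n - j" n] by simp
  ultimately show ?thesis by simp
qed

lemma real_choose_two: "real (n choose 2) = real n * (real n - 1) / 2"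
proof (cases n)
  case 0 then show ?thesis by simp
next
  case (Suc m)
  have "even (n * (n - 1))" by (cases "even n") auto
  then have "real (n * (n - 1) div 2) = real (n * (n-1)) / 2"
    by (simp add: real_of_nat_div)
  then show ?thesis using Suc by (simp add: choose_two of_nat_diff) (simp add: distrib_right)
qed

lemma dl_pointwise:
  assumes n: "n \<ge> 4"
  shows "dl n j \<le> (if j = 1 then 1 / real n else 0) + (if j = n - 1 then 1 / real n else 0)
            + 2 / (real n * (real n - 1))"
proof -
  have pos: "real n * (real n - 1) > 0" using n by simp
  consider "j = 0 \<or> j \<ge> n" | "j = 1" | "j = n - 1" | "2 \<le> j \<and> j + 2 \<le> n" using n by linarith
  then show ?thesis
  proof cases
    case 1 then show ?thesis using pos by (auto simp: dl_def)
  next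
    case 2 then show ?thesis using pos n by (auto simp: dl_def)
  next
    case 3
    have "n choose (n - 1) = n" using n binomial_symmetric[of 1 n] by simp
    then show ?thesis using 3 pos n by (auto simp: dl_def)
  next
    case 4
    have "real (n choose 2) \<le> real (n choose j)" using binom_ge_two 4 by simp
    moreover have "real (n choose 2) > 0" using n by simp
    moreover have "real (n choose j) > 0" using 4 by simp
    ultimately have "1 / real (n choose j) \<le> 1 / real (n choose 2)"
      by (intro divide_left_mono) auto
    also have "\<dots> = 2 / (real n * (real n - 1))" by (simp add: real_choose_two)
    finally have le: "1 / real (n choose j) \<le> 2 / (real n * (real n - 1))" .
    have "dl n j = 1 / real (n choose j)" using 4 by (simp add: dl_def)
    moreover have "j \<noteq> 1" "j \<noteq> n - 1" using 4 by auto
    ultimately show ?thesis using le by simp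
  qed
qed

lemma dl_sum:
  assumes n: "n \<ge> 4"
  shows "(\<Sum>j\<le>n. dl n j) \<le> 6 / real n"
proof -
  have "(\<Sum>j\<le>n. dl n j) \<le> (\<Sum>j\<le>n. (if j = 1 then 1 / real n else 0) + (if j = n - 1 then 1 / real n else 0)
            + 2 / (real n * (real n - 1)))"
    by (intro sum_mono dl_pointwise n)
  also have "\<dots> = 1 / real n + 1 / real n + (real n + 1) * (2 / (real n * (real n - 1)))"
    using n by (simp add: sum.distrib)
  also have "\<dots> \<le> 6 / real n"
  proof -
    have n1: "real n - 1 > 0" "real n > 0" using n by auto
    have "2 * (real n + 1) \<le> 4 * (real n - 1)" using n by simp
    then have "2 * (real n + 1) / (real n - 1) \<le> 4" using n1 by (simp add: pos_divide_le_eq)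
    then have "2 * (real n + 1) / (real n - 1) / real n \<le> 4 / real n"
      using n1 by (intro divide_right_mono) auto
    moreover have "(real n + 1) * (2 / (real n * (real n - 1))) = 2 * (real n + 1) / (real n - 1) / real n"
      by (simp add: divide_divide_eq_left mult.commute)
    ultimately have "(real n + 1) * (2 / (real n * (real n - 1))) \<le> 4 / real n" by simp
    then show ?thesis by simp
  qed
  finally show ?thesis .
qed

lemma bern_bound:
  fixes c :: "nat \<Rightarrow> real"
  assumes "\<And>k. 0 \<le> c k" "\<And>k. k \<le> n \<Longrightarrow> c k \<le> M" "0 \<le> x" "x \<le> 1"
  shows "\<bar>\<Sum>k=0..n. c k * real (n choose k) * x^k * (1-x)^(n-k)\<bar> \<le> M"
proof -
  have "0 \<le> (\<Sum>k=0..n. c k * real (n choose k) * x^k * (1-x)^(n-k))"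
    using assms by (intro sum_nonneg mult_nonneg_nonneg) auto
  moreover have "(\<Sum>k=0..n. c k * real (n choose k) * x^k * (1-x)^(n-k))
      \<le> (\<Sum>k=0..n. M * (real (n choose k) * x^k * (1-x)^(n-k)))"
    using assms by (intro sum_mono) (auto intro!: mult_right_mono simp: mult.assoc)
  moreover have "(\<Sum>k=0..n. M * (real (n choose k) * x^k * (1-x)^(n-k))) = M"
    using binomial_ring[of x "1 - x" n] by (simp add: sum_distrib_left[symmetric] atLeast0AtMost)
  ultimately show ?thesis by simp
qed

lemma epsB_bound:
  assumes "n \<ge> 4" "x \<in> {0..1}"
  shows "\<bar>epsB n x\<bar> \<le> 12 / real n"
proof -
  have "ee n n \<le> 12 / real n" using ee_le[of n] dl_sum[OF assms(1)] by simp
  then show ?thesis unfolding epsB_def using assms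
    by (intro bern_bound ee_nonneg) (auto intro: order_trans[OF ee_mono])
qed

lemma epsB_tendsto: "\<forall>e>0. \<forall>\<^sub>F n in sequentially. \<forall>x\<in>{0..1}. \<bar>epsB n x\<bar> < e"
proof (intro allI impI)
  fix e :: real assume e: "e > 0"
  obtain N :: nat where N: "N > 12 / e" using reals_Archimedean2 by blast
  show "\<forall>\<^sub>F n in sequentially. \<forall>x\<in>{0..1}. \<bar>epsB n x\<bar> < e"
    unfolding eventually_sequentially
  proof (intro exI[of _ "N + 4"] allI impI ballI)
    fix n :: nat and x :: real assume n: "N + 4 \<le> n" and x: "x \<in> {0..1}"
    have "12 / e < real n" using N n by linarith
    then have "12 / real n < e" using e n by (simp add: field_simps)
    then show "\<bar>epsB n x\<bar> < e" using epsB_bound[OF _ x, of n] n by linarith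
  qed
qed


lemma round_int:
  fixes r :: "real \<Rightarrow> int"
  assumes r: "\<And>a. \<bar>real_of_int (r a) - a\<bar> < 1" and a: "a \<in> \<int>"
  shows "real_of_int (r a) = a"
proof -
  obtain m where m: "a = of_int m" using a Ints_cases by blast
  have "\<bar>real_of_int (r a - m)\<bar> < 1" using r[of a] m by simp
  then have "\<bar>r a - m\<bar> < 1" by linarith
  then have "r a = m" by simp
  then show ?thesis using m by simp
qed

lemma coeff_close:
  fixes r :: "real \<Rightarrow> int"
  assumes r: "\<And>a. \<bar>real_of_int (r a) - a\<bar> < 1" and f: "f \<in> classX" and n: "n \<ge> 1" and k: "k \<le> n"
  shows "\<bar>real_of_int (r (f (real k / real n) * real (n choose k))) / real (n choose k) - f (real k / real n)\<bar> \<le> dl n k"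
proof -
  consider "k = 0" | "k = n" | "0 < k \<and> k < n" using k by linarith
  then show ?thesis
  proof cases
    case 1
    then show ?thesis using f round_int[OF r, of "f 0"] by (simp add: classX_def dl_def)
  next
    case 2
    then show ?thesis using f n round_int[OF r, of "f 1"] by (simp add: classX_def dl_def)
  next
    case 3
    define a where "a = f (real k / real n) * real (n choose k)"
    have C: "real (n choose k) > 0" using k by simp
    have "\<bar>real_of_int (r a) / real (n choose k) - f (real k / real n)\<bar>
        = \<bar>real_of_int (r a) - a\<bar> / real (n choose k)"
      using C by (simp add: a_def field_simps abs_divide[symmetric])
    also have "\<dots> \<le> 1 / real (n choose k)"
      using r[of a] C by (intro divide_right_mono) auto
    finally show ?thesis using 3 by (simp add: a_def dl_def)
  qed
qed

lemma roundB_rewrite: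
  fixes r :: "real \<Rightarrow> int" and f :: "real \<Rightarrow> real" and n :: nat and x s :: real
  defines "b \<equiv> \<lambda>k. real_of_int (r (f (real k / real n) * real (n choose k))) / real (n choose k)"
  shows "roundB r n f x + s * epsB n x = (\<Sum>k=0..n. (b k + s * ee n k) * real (n choose k) * x^k * (1-x)^(n-k))"
  unfolding roundB_def epsB_def sum_distrib_left sum.distrib[symmetric]
  by (rule sum.cong[OF refl]) (simp add: b_def field_simps)

lemma main_mono:
  fixes r :: "real \<Rightarrow> int"
  assumes r: "\<And>a. \<bar>real_of_int (r a) - a\<bar> < 1"
  shows "unif_asym_pres_mono (\<lambda>n. roundB r n) classX {0..1}"
proof -
  have A: "\<forall>e>0. \<forall>\<^sub>F n in sequentially. \<forall>x\<in>{0..1}. \<bar>epsB n x\<bar> < e" by (rule epsB_tendsto)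
  have B: "\<forall>e>0. \<forall>\<^sub>F n in sequentially. \<forall>x\<in>{0..1}. \<bar>- epsB n x\<bar> < e" using epsB_tendsto by simp
  have C: "\<forall>f\<in>classX. mono_on {0..1} f \<longrightarrow> (\<forall>n\<ge>1. mono_on {0..1} (\<lambda>x. roundB r n f x + epsB n x))"
  proof (intro ballI impI allI)
    fix f n assume f: "f \<in> classX" and fm: "mono_on {0..1} f" and n: "(1::nat) \<le> n"
    define b where "b \<equiv> \<lambda>k. real_of_int (r (f (real k / real n) * real (n choose k))) / real (n choose k)"
    have eq: "roundB r n f x + epsB n x = (\<Sum>k=0..n. (b k + 1 * ee n k) * real (n choose k) * x^k * (1-x)^(n-k))" for x
      using roundB_rewrite[where r=r and f=f and n=n and x=x and s=1] unfolding b_def by simp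
    have "mono_on {0..1} (\<lambda>x. \<Sum>k=0..n. (b k + 1 * ee n k) * real (n choose k) * x^k * (1-x)^(n-k))"
    proof (rule bern_mono)
      fix k assume k: "k < n"
      have c1: "\<bar>b k - f (real k / real n)\<bar> \<le> dl n k"
        using coeff_close[OF r f n, of k] k unfolding b_def by simp
      have c2: "\<bar>b (Suc k) - f (real (Suc k) / real n)\<bar> \<le> dl n (Suc k)"
        using coeff_close[OF r f n, of "Suc k"] k unfolding b_def by simp
      have "f (real k / real n) \<le> f (real (Suc k) / real n)"
        using k n by (intro mono_onD[OF fm]) (auto simp: divide_right_mono)
      then show "b k + 1 * ee n k \<le> b (Suc k) + 1 * ee n (Suc k)"
        using c1 c2 by (simp add: ee_Suc abs_le_iff)
    qed
    then show "mono_on {0..1} (\<lambda>x. roundB r n f x + epsB n x)" using eq by simp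
  qed
  have D: "\<forall>f\<in>classX. antimono_on {0..1} f \<longrightarrow> (\<forall>n\<ge>1. antimono_on {0..1} (\<lambda>x. roundB r n f x + - epsB n x))"
  proof (intro ballI impI allI)
    fix f n assume f: "f \<in> classX" and fm: "antimono_on {0..1} f" and n: "(1::nat) \<le> n"
    define b where "b \<equiv> \<lambda>k. - (real_of_int (r (f (real k / real n) * real (n choose k))) / real (n choose k))"
    have eq: "- (roundB r n f x + (-1) * epsB n x) = (\<Sum>k=0..n. (b k + ee n k) * real (n choose k) * x^k * (1-x)^(n-k))" for x
      using roundB_rewrite[where r=r and f=f and n=n and x=x and s="-1"] unfolding b_def
      by (simp add: sum_negf[symmetric] algebra_simps)
    have "mono_on {0..1} (\<lambda>x. \<Sum>k=0..n. (b k + ee n k) * real (n choose k) * x^k * (1-x)^(n-k))"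
    proof (rule bern_mono)
      fix k assume k: "k < n"
      have c1: "\<bar>- b k - f (real k / real n)\<bar> \<le> dl n k"
        using coeff_close[OF r f n, of k] k unfolding b_def by simp
      have c2: "\<bar>- b (Suc k) - f (real (Suc k) / real n)\<bar> \<le> dl n (Suc k)"
        using coeff_close[OF r f n, of "Suc k"] k unfolding b_def by simp
      have "f (real (Suc k) / real n) \<le> f (real k / real n)"
        using k n by (intro monotone_onD[OF fm]) (auto simp: divide_right_mono)
      then show "b k + ee n k \<le> b (Suc k) + ee n (Suc k)"
        using c1 c2 by (simp add: ee_Suc abs_le_iff)
    qed
    then have "mono_on {0..1} (\<lambda>x. - (roundB r n f x + (-1) * epsB n x))" using eq by simp
    then show "antimono_on {0..1} (\<lambda>x. roundB r n f x + - epsB n x)"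
      unfolding monotone_on_def
    proof (intro ballI impI)
      fix x y :: real assume M: "\<forall>x\<in>{0..1}. \<forall>y\<in>{0..1}. x \<le> y \<longrightarrow>
          - (roundB r n f x + - 1 * epsB n x) \<le> - (roundB r n f y + - 1 * epsB n y)"
        and xy: "x \<in> {0..1}" "y \<in> {0..1}" "x \<le> y"
      show "roundB r n f y + - epsB n y \<le> roundB r n f x + - epsB n x"
        using M[rule_format, OF xy] by simp
    qed
  qed
  show ?thesis unfolding unif_asym_pres_mono_def
    apply (rule exI[of _ 1], rule exI[of _ epsB], rule exI[of _ "\<lambda>n x. - epsB n x"])
    apply (intro conjI order_refl)
       apply (rule A)
      apply (rule B)
     apply (rule C)
    apply (rule D)
    done
qed

theorem theorem1p3:
  shows "unif_asym_pres_mono Btilde classX {0..1}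
         \<and> (\<forall>r. nearest_int_fun r \<longrightarrow> unif_asym_pres_mono (\<lambda>n. roundB r n) classX {0..1})"
proof (intro conjI allI impI)
  have "Btilde = (\<lambda>n. roundB floor n)" by (intro ext) (simp add: Btilde_def)
  moreover have "unif_asym_pres_mono (\<lambda>n. roundB floor n) classX {0..1}"
    by (rule main_mono) linarith
  ultimately show "unif_asym_pres_mono Btilde classX {0..1}" by simp
next
  fix r :: "real \<Rightarrow> int" assume "nearest_int_fun r"
  then have h: "\<forall>a. \<bar>real_of_int (r a) - a\<bar> \<le> 1/2" unfolding nearest_int_fun_def .
  have "\<bar>real_of_int (r a) - a\<bar> < 1" for a using h[rule_format, of a] by linarith
  then show "unif_asym_pres_mono (\<lambda>n. roundB r n) classX {0..1}" by (rule main_mono)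
qed

end
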